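(* Let $(\mathcal G,\lambda)$ be a small morphism-colored groupoid satisfying the inverse-compatibility condition, and let $\varpi(\mathcal G,\lambda)=(\bar\lambda,s_1)$ be the morphism-colored functor from $(\mathcal G,\lambda)$ to the discrete morphism-colored category $(\mathcal U(\mathcal G,\lambda),\mathrm{id})$. Then for every category $\mathcal C$ and every morphism-colored functor $(F,\gamma)$ from $(\mathcal G,\lambda)$ to the discrete morphism-colored category $(\mathcal C,\mathrm{id})$, there exists a unique morphism-colored functor $(\check F,\check\gamma)$ from $(\mathcal U(\mathcal G,\lambda),\mathrm{id})$ to $(\mathcal C,\mathrm{id})$ such that $(\check F,\check\gamma)\circ\varpi(\mathcal G,\lambda)=(F,\gamma)$, i.e. $\check F\circ\bar\lambda=F$ and $\check\gamma\circ s_1=\gamma$.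
   Context: A morphism-colored category is a pair $(\mathcal C,\lambda)$ where $\mathcal C$ is a category and $\lambda$ assigns to each morphism $f$ of $\mathcal C$ a "color" $\lambda(f)$, such that: whenever $g,f_1,f_2\in\mathrm{Mor}(\mathcal C)$ with $(f_1,f_2)$ composable satisfy $\lambda(g)=\lambda(f_1\circ f_2)$, there exist composable $g_1,g_2$ with $g=g_1\circ g_2$, $\lambda(g_1)=\lambda(f_1)$, $\lambda(g_2)=\lambda(f_2)$. It is a morphism-colored groupoid if $\mathcal C$ is a groupoid, and small if $\mathcal C$ is small and $\lambda$ is a map into a set. For any category $\mathcal C$, $(\mathcal C,\mathrm{id})$ (each morphism colored by itself) is the discrete morphism-colored category. A morphism-colored functor $(F,\gamma):(\mathcal C,\lambda)\to(\mathcal C',\lambda')$ is a functor $F:\mathcal C\to\mathcal C'$ together with a map $\gamma$ on colors such that $\gamma(\lambda(f))=\lambda'(F(f))$ for every morphism $f$ of $\mathcal C$; composition is $(F',\gamma')\circ(F,\gamma)=(F'\circ F,\gamma'\circ\gamma)$. Standing setup: $(\mathcal G,\lambda)$ small morphism-colored groupoid, $\lambda:\mathrm{Mor}(\mathcal G)\to I$, with inverse-compatibility: $\lambda(f)=\lambda(g)\Rightarrow\lambda(f^{-1})=\lambda(g^{-1})$. $I_1=\lambda(\mathrm{Mor}(\mathcal G))$, $\lambda_1:\mathrm{Mor}(\mathcal G)\to I_1$ the corestriction of $\lambda$; $I_0=\{\lambda(\mathrm{id}_x)\}$, $\lambda_0(x)=\lambda(\mathrm{id}_x)$. The equivalence relation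 $\overset{1}{\sim}$ on $I_1$ is generated by the declaration $\lambda(f_1\circ\cdots\circ f_l)\overset{1}{\sim}\lambda(g_1\circ\cdots\circ g_l)$ for composable sequences with $\lambda(f_i)=\lambda(g_i)$ for all $i$ (this declaration is already an equivalence relation); $s_1:I_1\to\bar I_1$ is the quotient. The equivalence relation $\overset{0}{\sim}$ on $I_0$ is given by $\lambda_0(\mathrm{source}(f))\overset{0}{\sim}\lambda_0(\mathrm{source}(g))$ whenever $(s_1\circ\lambda_1)(f)=(s_1\circ\lambda_1)(g)$; $s_0:I_0\to\bar I_0$ is the quotient. $\mathcal U(\mathcal G,\lambda)$ is the groupoid with objects $\bar I_0$, morphisms $\bar I_1$, source/target of $(s_1\circ\lambda_1)(f)$ equal to $(s_0\circ\lambda_0)$ of source/target of $f$, and composition $(s_1\lambda_1)(f)\circ(s_1\lambda_1)(g)=(s_1\lambda_1)(f\circ g)$. The functor $\bar\lambda:\mathcal G\to\mathcal U(\mathcal G,\lambda)$ is $\bar\lambda(x)=(s_0\circ\lambda_0)(x)$, $\bar\lambda(f)=(s_1\circ\lambda_1)(f)$, and $\varpi(\mathcal G,\lambda):=(\bar\lambda,s_1)$. *)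

theory Defs
  imports Main
begin

record ('o, 'm) cat =
  Obj :: "'o set"
  Mor :: "'m set"
  Dom :: "'m \<Rightarrow> 'o"
  Cod :: "'m \<Rightarrow> 'o"
  Ide :: "'o \<Rightarrow> 'm"
  Comp :: "'m \<Rightarrow> 'm \<Rightarrow> 'm"   (* Comp C f g = f \<circ> g, defined when Dom f = Cod g *)

definition category :: "('o, 'm) cat \<Rightarrow> bool" where
  "category C \<longleftrightarrow>
     (\<forall>f\<in>Mor C. Dom C f \<in> Obj C \<and> Cod C f \<in> Obj C) \<and>
     (\<forall>x\<in>Obj C. Ide C x \<in> Mor C \<and> Dom C (Ide C x) = x \<and> Cod C (Ide C x) = x) \<and>
     (\<forall>f\<in>Mor C. \<forall>g\<in>Mor C. Dom C f = Cod C g \<longrightarrow>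
        Comp C f g \<in> Mor C \<and> Dom C (Comp C f g) = Dom C g \<and> Cod C (Comp C f g) = Cod C f) \<and>
     (\<forall>f\<in>Mor C. Comp C (Ide C (Cod C f)) f = f \<and> Comp C f (Ide C (Dom C f)) = f) \<and>
     (\<forall>f\<in>Mor C. \<forall>g\<in>Mor C. \<forall>h\<in>Mor C. Dom C f = Cod C g \<longrightarrow> Dom C g = Cod C h \<longrightarrow>
        Comp C (Comp C f g) h = Comp C f (Comp C g h))"

definition is_inverse :: "('o, 'm) cat \<Rightarrow> 'm \<Rightarrow> 'm \<Rightarrow> bool" where
  "is_inverse C f g \<longleftrightarrow> g \<in> Mor C \<and> Dom C g = Cod C f \<and> Cod C g = Dom C f \<and>
     Comp C f g = Ide C (Cod C f) \<and> Comp C g f = Ide C (Dom C f)"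

definition groupoid :: "('o, 'm) cat \<Rightarrow> bool" where
  "groupoid C \<longleftrightarrow> category C \<and> (\<forall>f\<in>Mor C. \<exists>g. is_inverse C f g)"

definition inv_mor :: "('o, 'm) cat \<Rightarrow> 'm \<Rightarrow> 'm" where
  "inv_mor C f = (SOME g. is_inverse C f g)"

definition "functor" :: "('o, 'm) cat \<Rightarrow> ('p, 'n) cat \<Rightarrow> ('o \<Rightarrow> 'p) \<Rightarrow> ('m \<Rightarrow> 'n) \<Rightarrow> bool" where
  "functor C D Fo Fm \<longleftrightarrow> category C \<and> category D \<and>
     (\<forall>x\<in>Obj C. Fo x \<in> Obj D) \<and>
     (\<forall>f\<in>Mor C. Fm f \<in> Mor D \<and> Dom D (Fm f) = Fo (Dom C f) \<and> Cod D (Fm f) = Fo (Cod C f)) \<and>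
     (\<forall>x\<in>Obj C. Fm (Ide C x) = Ide D (Fo x)) \<and>
     (\<forall>f\<in>Mor C. \<forall>g\<in>Mor C. Dom C f = Cod C g \<longrightarrow> Fm (Comp C f g) = Comp D (Fm f) (Fm g))"

definition mc_category :: "('o, 'm) cat \<Rightarrow> ('m \<Rightarrow> 'c) \<Rightarrow> bool" where
  "mc_category C lam \<longleftrightarrow> category C \<and>
     (\<forall>g\<in>Mor C. \<forall>f1\<in>Mor C. \<forall>f2\<in>Mor C.
        Dom C f1 = Cod C f2 \<and> lam g = lam (Comp C f1 f2) \<longrightarrow>
        (\<exists>g1\<in>Mor C. \<exists>g2\<in>Mor C. Dom C g1 = Cod C g2 \<and> g = Comp C g1 g2 \<and>
            lam g1 = lam f1 \<and> lam g2 = lam f2))"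

definition mc_groupoid :: "('o, 'm) cat \<Rightarrow> ('m \<Rightarrow> 'c) \<Rightarrow> bool" where
  "mc_groupoid C lam \<longleftrightarrow> mc_category C lam \<and> groupoid C"

definition mc_functor ::
  "('o, 'm) cat \<Rightarrow> ('m \<Rightarrow> 'c) \<Rightarrow> ('p, 'n) cat \<Rightarrow> ('n \<Rightarrow> 'd) \<Rightarrow>
   ('o \<Rightarrow> 'p) \<Rightarrow> ('m \<Rightarrow> 'n) \<Rightarrow> ('c \<Rightarrow> 'd) \<Rightarrow> bool" where
  "mc_functor C lam D lam' Fo Fm gam \<longleftrightarrow>
     mc_category C lam \<and> mc_category D lam' \<and> functor C D Fo Fm \<and>
     (\<forall>f\<in>Mor C. gam (lam f) = lam' (Fm f))"

definition inverse_compatible :: "('o, 'm) cat \<Rightarrow> ('m \<Rightarrow> 'c) \<Rightarrow> bool" where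
  "inverse_compatible G lam \<longleftrightarrow>
     (\<forall>f\<in>Mor G. \<forall>g\<in>Mor G. lam f = lam g \<longrightarrow> lam (inv_mor G f) = lam (inv_mor G g))"

fun comp_list :: "('o, 'm) cat \<Rightarrow> 'm list \<Rightarrow> 'm" where
  "comp_list C [] = undefined"
| "comp_list C [f] = f"
| "comp_list C (f # fs) = Comp C f (comp_list C fs)"

definition composable_seq :: "('o, 'm) cat \<Rightarrow> 'm list \<Rightarrow> bool" where
  "composable_seq C fs \<longleftrightarrow> fs \<noteq> [] \<and> set fs \<subseteq> Mor C \<and>
     (\<forall>i. Suc i < length fs \<longrightarrow> Dom C (fs ! i) = Cod C (fs ! Suc i))"

definition eq_closure :: "'a set \<Rightarrow> 'a rel \<Rightarrow> 'a rel" where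
  "eq_closure A R = Id_on A \<union> (R \<union> R\<inverse>)\<^sup>+"

definition I1 :: "('o, 'm) cat \<Rightarrow> ('m \<Rightarrow> 'c) \<Rightarrow> 'c set" where
  "I1 G lam = lam ` Mor G"

definition lam0 :: "('o, 'm) cat \<Rightarrow> ('m \<Rightarrow> 'c) \<Rightarrow> 'o \<Rightarrow> 'c" where
  "lam0 G lam x = lam (Ide G x)"

definition I0 :: "('o, 'm) cat \<Rightarrow> ('m \<Rightarrow> 'c) \<Rightarrow> 'c set" where
  "I0 G lam = lam0 G lam ` Obj G"

definition rel1_decl :: "('o, 'm) cat \<Rightarrow> ('m \<Rightarrow> 'c) \<Rightarrow> 'c rel" where
  "rel1_decl G lam = {(lam (comp_list G fs), lam (comp_list G gs)) | fs gs.
      composable_seq G fs \<and> composable_seq G gs \<and> length fs = length gs \<and>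
      (\<forall>i<length fs. lam (fs ! i) = lam (gs ! i))}"

definition rel1 :: "('o, 'm) cat \<Rightarrow> ('m \<Rightarrow> 'c) \<Rightarrow> 'c rel" where
  "rel1 G lam = eq_closure (I1 G lam) (rel1_decl G lam)"

definition s1 :: "('o, 'm) cat \<Rightarrow> ('m \<Rightarrow> 'c) \<Rightarrow> 'c \<Rightarrow> 'c set" where
  "s1 G lam c = rel1 G lam `` {c}"

definition rel0_decl :: "('o, 'm) cat \<Rightarrow> ('m \<Rightarrow> 'c) \<Rightarrow> 'c rel" where
  "rel0_decl G lam = {(lam0 G lam (Dom G f), lam0 G lam (Dom G g)) | f g.
      f \<in> Mor G \<and> g \<in> Mor G \<and> s1 G lam (lam f) = s1 G lam (lam g)}"

definition rel0 :: "('o, 'm) cat \<Rightarrow> ('m \<Rightarrow> 'c) \<Rightarrow> 'c rel" where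
  "rel0 G lam = eq_closure (I0 G lam) (rel0_decl G lam)"

definition s0 :: "('o, 'm) cat \<Rightarrow> ('m \<Rightarrow> 'c) \<Rightarrow> 'c \<Rightarrow> 'c set" where
  "s0 G lam c = rel0 G lam `` {c}"

definition lbar_obj :: "('o, 'm) cat \<Rightarrow> ('m \<Rightarrow> 'c) \<Rightarrow> 'o \<Rightarrow> 'c set" where
  "lbar_obj G lam x = s0 G lam (lam0 G lam x)"

definition lbar_mor :: "('o, 'm) cat \<Rightarrow> ('m \<Rightarrow> 'c) \<Rightarrow> 'm \<Rightarrow> 'c set" where
  "lbar_mor G lam f = s1 G lam (lam f)"

text \<open>U(G,lambda): operations defined via (arbitrary) representatives; the paper
  asserts these are independent of the choice.\<close>
definition U :: "('o, 'm) cat \<Rightarrow> ('m \<Rightarrow> 'c) \<Rightarrow> ('c set, 'c set) cat" where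
  "U G lam = \<lparr>
     Obj = I0 G lam // rel0 G lam,
     Mor = I1 G lam // rel1 G lam,
     Dom = (\<lambda>m. lbar_obj G lam (Dom G (SOME f. f \<in> Mor G \<and> lbar_mor G lam f = m))),
     Cod = (\<lambda>m. lbar_obj G lam (Cod G (SOME f. f \<in> Mor G \<and> lbar_mor G lam f = m))),
     Ide = (\<lambda>a. lbar_mor G lam (Ide G (SOME x. x \<in> Obj G \<and> lbar_obj G lam x = a))),
     Comp = (\<lambda>m n. lbar_mor G lam
        (case (SOME (f, g). f \<in> Mor G \<and> g \<in> Mor G \<and> Dom G f = Cod G g \<and>
                lbar_mor G lam f = m \<and> lbar_mor G lam g = n) of (f, g) \<Rightarrow> Comp G f g)) \<rparr>"

end

theory Submission imports Defs begin

locale mcg =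
  fixes G :: "('o, 'm) cat" and lam :: "'m \<Rightarrow> 'c"
  assumes mcg: "mc_groupoid G lam" and ic: "inverse_compatible G lam"
begin

lemma catG: "category G" using mcg unfolding mc_groupoid_def mc_category_def by blast

lemma dc1: "f \<in> Mor G \<Longrightarrow> Dom G f \<in> Obj G" and dc2: "f \<in> Mor G \<Longrightarrow> Cod G f \<in> Obj G"
  using catG unfolding category_def by blast+

lemma ide: "x \<in> Obj G \<Longrightarrow> Ide G x \<in> Mor G" "x \<in> Obj G \<Longrightarrow> Dom G (Ide G x) = x"
  "x \<in> Obj G \<Longrightarrow> Cod G (Ide G x) = x"
  using catG unfolding category_def by blast+

lemma comp: assumes "f \<in> Mor G" "g \<in> Mor G" "Dom G f = Cod G g"
  shows "Comp G f g \<in> Mor G" "Dom G (Comp G f g) = Dom G g" "Cod G (Comp G f g) = Cod G f"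
  using catG assms unfolding category_def by blast+

lemma unitl: "f \<in> Mor G \<Longrightarrow> Comp G (Ide G (Cod G f)) f = f"
  and unitr: "f \<in> Mor G \<Longrightarrow> Comp G f (Ide G (Dom G f)) = f"
  using catG unfolding category_def by blast+

lemma assoc: "f \<in> Mor G \<Longrightarrow> g \<in> Mor G \<Longrightarrow> h \<in> Mor G \<Longrightarrow> Dom G f = Cod G g \<Longrightarrow> Dom G g = Cod G h \<Longrightarrow>
  Comp G (Comp G f g) h = Comp G f (Comp G g h)"
  using catG unfolding category_def by blast

lemma mc: "g \<in> Mor G \<Longrightarrow> f1 \<in> Mor G \<Longrightarrow> f2 \<in> Mor G \<Longrightarrow> Dom G f1 = Cod G f2 \<Longrightarrow> lam g = lam (Comp G f1 f2) \<Longrightarrow>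
   \<exists>g1\<in>Mor G. \<exists>g2\<in>Mor G. Dom G g1 = Cod G g2 \<and> g = Comp G g1 g2 \<and> lam g1 = lam f1 \<and> lam g2 = lam f2"
  using mcg unfolding mc_groupoid_def mc_category_def by blast

abbreviation "iv f \<equiv> inv_mor G f"

lemma isinv: "f \<in> Mor G \<Longrightarrow> is_inverse G f (iv f)"
proof -
  assume "f \<in> Mor G"
  then have "\<exists>g. is_inverse G f g" using mcg unfolding mc_groupoid_def groupoid_def by blast
  then show ?thesis unfolding inv_mor_def by (rule someI_ex)
qed

lemma iv: assumes "f \<in> Mor G"
  shows "iv f \<in> Mor G" "Dom G (iv f) = Cod G f" "Cod G (iv f) = Dom G f"
   "Comp G f (iv f) = Ide G (Cod G f)" "Comp G (iv f) f = Ide G (Dom G f)"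
  using isinv[OF assms] unfolding is_inverse_def by auto

lemma inv_unique: assumes f: "f \<in> Mor G" and "is_inverse G f g" shows "g = iv f"
proof -
  have g: "g \<in> Mor G" "Dom G g = Cod G f" "Cod G g = Dom G f" "Comp G f g = Ide G (Cod G f)"
     "Comp G g f = Ide G (Dom G f)" using assms(2) unfolding is_inverse_def by auto
  have "g = Comp G g (Ide G (Dom G g))" using unitr[OF g(1)] by simp
  also have "\<dots> = Comp G g (Comp G f (iv f))" using iv[OF f] g by simp
  also have "\<dots> = Comp G (Comp G g f) (iv f)" using assoc[OF g(1) f iv(1)[OF f]] g iv[OF f] by simp
  also have "\<dots> = Comp G (Ide G (Cod G (iv f))) (iv f)" using g iv[OF f] by simp
  also have "\<dots> = iv f" using unitl[OF iv(1)[OF f]] iv(3)[OF f] by simp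
  finally show ?thesis .
qed

lemma ivv: "f \<in> Mor G \<Longrightarrow> iv (iv f) = f"
  using inv_unique[of "iv f" f] iv[of f] unfolding is_inverse_def by auto

lemma iv_ide: assumes "x \<in> Obj G" shows "iv (Ide G x) = Ide G x"
proof -
  have "Comp G (Ide G x) (Ide G x) = Ide G x" using unitl[OF ide(1)[OF assms]] ide[OF assms] by simp
  then show ?thesis using inv_unique[of "Ide G x" "Ide G x"] ide[OF assms] unfolding is_inverse_def by auto
qed

lemma ic': "f \<in> Mor G \<Longrightarrow> g \<in> Mor G \<Longrightarrow> lam f = lam g \<Longrightarrow> lam (iv f) = lam (iv g)"
  using ic unfolding inverse_compatible_def by blast

lemma iv_comp: assumes f: "f \<in> Mor G" and g: "g \<in> Mor G" and fg: "Dom G f = Cod G g"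
  shows "iv (Comp G f g) = Comp G (iv g) (iv f)"
proof -
  note c = comp[OF f g fg]
  note F = iv[OF f] and Gg = iv[OF g]
  have m: "Comp G (iv g) (iv f) \<in> Mor G" using comp F Gg fg by simp
  have e1: "Comp G (Comp G f g) (Comp G (iv g) (iv f)) = Ide G (Cod G f)"
  proof -
    have "Comp G (Comp G f g) (Comp G (iv g) (iv f)) = Comp G f (Comp G g (Comp G (iv g) (iv f)))"
      using assoc[OF f g m] fg comp F Gg by simp
    also have "Comp G g (Comp G (iv g) (iv f)) = Comp G (Comp G g (iv g)) (iv f)"
      using assoc[OF g Gg(1) F(1)] F Gg fg by simp
    also have "\<dots> = iv f" using Gg F fg unitl[OF F(1)] by simp
    finally show ?thesis using F by simp
  qed
  have e2: "Comp G (Comp G (iv g) (iv f)) (Comp G f g) = Ide G (Dom G g)"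
  proof -
    have "Comp G (Comp G (iv g) (iv f)) (Comp G f g) = Comp G (iv g) (Comp G (iv f) (Comp G f g))"
      using assoc[OF Gg(1) F(1) c(1)] fg comp F Gg c by simp
    also have "Comp G (iv f) (Comp G f g) = Comp G (Comp G (iv f) f) g"
      using assoc[OF F(1) f g] F fg by simp
    also have "\<dots> = g" using F fg unitl g by simp
    finally show ?thesis using Gg by simp
  qed
  show ?thesis
    by (rule inv_unique[symmetric], rule c(1)) (use m e1 e2 c F Gg fg comp in \<open>auto simp: is_inverse_def\<close>)
qed

lemma ID: assumes f: "f \<in> Mor G" and g: "g \<in> Mor G" and e: "lam f = lam g"
  shows "lam (Ide G (Dom G f)) = lam (Ide G (Dom G g))"
proof -
  have df: "Dom G f \<in> Obj G" using dc1 f by blast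
  have dg: "Dom G g \<in> Obj G" using dc1 g by blast
  have "lam g = lam (Comp G f (Ide G (Dom G f)))" using unitr[OF f] e by simp
  moreover have "Dom G f = Cod G (Ide G (Dom G f))" using ide(3)[OF df] by simp
  ultimately obtain g1 g2 where g12: "g1 \<in> Mor G" "g2 \<in> Mor G" "Dom G g1 = Cod G g2" "g = Comp G g1 g2"
     "lam g2 = lam (Ide G (Dom G f))"
    using mc[OF g f ide(1)[OF df]] by blast
  have dg2: "Dom G g2 = Dom G g" using g12 comp by simp
  have "lam (Ide G (Dom G f)) = lam (Comp G g2 (Ide G (Dom G g2)))" using unitr g12 by simp
  moreover have dg2o: "Dom G g2 \<in> Obj G" using dc1 g12 by blast
  moreover have "Dom G g2 = Cod G (Ide G (Dom G g2))" using ide(3)[OF dg2o] by simp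
  ultimately obtain a b where ab: "a \<in> Mor G" "b \<in> Mor G" "Dom G a = Cod G b" "Ide G (Dom G f) = Comp G a b"
      "lam a = lam g2" "lam b = lam (Ide G (Dom G g2))"
    using mc[OF ide(1)[OF df] g12(2) ide(1)[OF dg2o]] by blast
  have db: "Dom G b = Dom G f" using ab comp ide[OF df] by metis
  have "a = Comp G a (Ide G (Dom G a))" using unitr[OF ab(1)] by simp
  also have "\<dots> = Comp G a (Comp G b (iv b))" using iv ab by simp
  also have "\<dots> = Comp G (Comp G a b) (iv b)" using assoc[OF ab(1,2) iv(1)] ab iv by simp
  also have "\<dots> = Comp G (Ide G (Cod G (iv b))) (iv b)" using ab iv db by simp
  also have "\<dots> = iv b" using unitl[OF iv(1)[OF ab(2)]] by simp
  finally have aeq: "a = iv b" .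
  have "lam (iv b) = lam (iv (Ide G (Dom G g2)))" using ic' ab ide dc1 g12 by metis
  then have "lam (iv b) = lam (Ide G (Dom G g))" using iv_ide dc1 g12 dg2 by metis
  then show ?thesis using aeq ab g12 by simp
qed

lemma ID_cod: assumes f: "f \<in> Mor G" and g: "g \<in> Mor G" and e: "lam f = lam g"
  shows "lam (Ide G (Cod G f)) = lam (Ide G (Cod G g))"
  using ID[OF iv(1)[OF f] iv(1)[OF g] ic'[OF f g e]] iv f g by simp

end

context mcg begin

inductive Rz :: "'m \<Rightarrow> 'c list \<Rightarrow> bool" where
  base: "f \<in> Mor G \<Longrightarrow> Rz f [lam f]"
| step: "f \<in> Mor G \<Longrightarrow> Rz g w \<Longrightarrow> Dom G f = Cod G g \<Longrightarrow> Rz (Comp G f g) (lam f # w)"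

lemma Rz_mor: "Rz h w \<Longrightarrow> h \<in> Mor G \<and> w \<noteq> []"
  by (induction rule: Rz.induct) (auto simp: comp)

lemma Rz_single: "Rz k [c] \<Longrightarrow> k \<in> Mor G \<and> lam k = c"
  by (cases rule: Rz.cases) (auto dest: Rz_mor)

lemma Rz_cons: "Rz k (c # w) \<Longrightarrow> w \<noteq> [] \<Longrightarrow>
   \<exists>f g. k = Comp G f g \<and> f \<in> Mor G \<and> Rz g w \<and> Dom G f = Cod G g \<and> lam f = c"
  by (cases rule: Rz.cases) auto

lemma Rz_color: "Rz h w \<Longrightarrow> h' \<in> Mor G \<Longrightarrow> lam h' = lam h \<Longrightarrow> Rz h' w"
proof (induction arbitrary: h' rule: Rz.induct)
  case (base f)
  then show ?case using Rz.base[of h'] by simp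
next
  case (step f g w)
  have gm: "g \<in> Mor G" using Rz_mor step by blast
  obtain g1 g2 where "g1 \<in> Mor G" "g2 \<in> Mor G" "Dom G g1 = Cod G g2" "h' = Comp G g1 g2"
      "lam g1 = lam f" "lam g2 = lam g"
    using mc[OF step.prems(1) step.hyps(1) gm step.hyps(3) step.prems(2)] by blast
  then show ?case using Rz.step[of g1 g2 w] step.IH by simp
qed

lemma Rz_app: "Rz h w \<Longrightarrow> Rz k v \<Longrightarrow> Dom G h = Cod G k \<Longrightarrow> Rz (Comp G h k) (w @ v)"
proof (induction arbitrary: k v rule: Rz.induct)
  case (base f)
  then show ?case using Rz.step by simp
next
  case (step f g w)
  have gm: "g \<in> Mor G" and km: "k \<in> Mor G" using Rz_mor step by blast+
  have dk: "Dom G g = Cod G k" using step comp[OF step.hyps(1) gm] by simp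
  have "Comp G (Comp G f g) k = Comp G f (Comp G g k)" using assoc[OF step.hyps(1) gm km] step dk by simp
  moreover have "Rz (Comp G g k) (w @ v)" using step.IH step dk by simp
  ultimately show ?case using Rz.step[OF step.hyps(1)] comp[OF gm km dk] step by simp
qed

definition invc :: "'c \<Rightarrow> 'c" where "invc c = lam (iv (SOME f. f \<in> Mor G \<and> lam f = c))"

lemma invc_lam: "f \<in> Mor G \<Longrightarrow> invc (lam f) = lam (iv f)"
proof -
  assume f: "f \<in> Mor G"
  then have "\<exists>g. g \<in> Mor G \<and> lam g = lam f" by blast
  then have "(SOME g. g \<in> Mor G \<and> lam g = lam f) \<in> Mor G \<and> lam (SOME g. g \<in> Mor G \<and> lam g = lam f) = lam f"
    by (rule someI_ex)
  then show ?thesis unfolding invc_def using ic' f by metis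
qed

lemma Rz_inv: "Rz h w \<Longrightarrow> Rz (iv h) (rev (map invc w))"
proof (induction rule: Rz.induct)
  case (base f)
  then show ?case using Rz.base[OF iv(1)[OF base]] invc_lam[OF base] by simp
next
  case (step f g w)
  have gm: "g \<in> Mor G" using Rz_mor step by blast
  have "Rz (Comp G (iv g) (iv f)) (rev (map invc w) @ [invc (lam f)])"
    using Rz_app[OF step.IH Rz.base[OF iv(1)[OF step.hyps(1)]]] invc_lam[OF step.hyps(1)] iv[OF step.hyps(1)] iv[OF gm] step by simp
  then show ?case using iv_comp[OF step.hyps(1) gm step.hyps(3)] by simp
qed

lemma Rz_dom: "Rz h w \<Longrightarrow> Rz k w \<Longrightarrow> lam (Ide G (Dom G h)) = lam (Ide G (Dom G k))"
proof (induction arbitrary: k rule: Rz.induct)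
  case (base f)
  then show ?case using Rz_single ID by metis
next
  case (step f g w)
  have gm: "g \<in> Mor G" and "w \<noteq> []" using Rz_mor step by blast+
  then obtain f' g' where "k = Comp G f' g'" "f' \<in> Mor G" "Rz g' w" "Dom G f' = Cod G g'"
    using Rz_cons step.prems by blast
  then show ?case using step.IH[of g'] comp[OF step.hyps(1) gm step.hyps(3)] comp Rz_mor by metis
qed

lemma Rz_hd: "Rz h w \<Longrightarrow> \<exists>f. f \<in> Mor G \<and> lam f = hd w \<and> Cod G h = Cod G f"
proof (induction rule: Rz.induct)
  case (base f) then show ?case by auto
next
  case (step f g w) then show ?case using comp Rz_mor by (metis list.sel(1))
qed

lemma Rz_cod: "Rz h w \<Longrightarrow> Rz k w \<Longrightarrow> lam (Ide G (Cod G h)) = lam (Ide G (Cod G k))"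
  using Rz_hd ID_cod by metis

definition dc :: "'c \<Rightarrow> 'c \<Rightarrow> bool" where
  "dc c d \<longleftrightarrow> (\<exists>w F H. Rz F w \<and> Rz H w \<and> lam F = c \<and> lam H = d)"

lemma dc_all: "dc c d \<Longrightarrow> F \<in> Mor G \<Longrightarrow> lam F = c \<Longrightarrow> H \<in> Mor G \<Longrightarrow> lam H = d \<Longrightarrow>
   \<exists>w. Rz F w \<and> Rz H w"
  unfolding dc_def using Rz_color by metis

lemma dc_refl: "f \<in> Mor G \<Longrightarrow> dc (lam f) (lam f)"
  unfolding dc_def using Rz.base by blast

lemma dc_sym: "dc c d \<Longrightarrow> dc d c"
  unfolding dc_def by blast

lemma dc_I1: "dc c d \<Longrightarrow> c \<in> I1 G lam \<and> d \<in> I1 G lam"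
  unfolding dc_def I1_def using Rz_mor by blast

lemma tr_dom: assumes x: "x \<in> Obj G" and K: "K \<in> Mor G" and e: "lam (Ide G x) = lam (Ide G (Dom G K))"
  shows "\<exists>K' \<in> Mor G. Dom G K' = x \<and> lam K' = lam K"
proof -
  have "lam (Ide G x) = lam (Comp G (iv K) K)" using e iv[OF K] by simp
  then obtain a b where ab: "a \<in> Mor G" "b \<in> Mor G" "Dom G a = Cod G b" "Ide G x = Comp G a b" "lam b = lam K"
    using mc[OF ide(1)[OF x] iv(1)[OF K] K] iv[OF K] by metis
  have "Dom G b = x" using ab comp[OF ab(1-3)] ide[OF x] by metis
  then show ?thesis using ab by blast
qed

lemma tr_cod: assumes x: "x \<in> Obj G" and K: "K \<in> Mor G" and e: "lam (Ide G x) = lam (Ide G (Cod G K))"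
  shows "\<exists>K' \<in> Mor G. Cod G K' = x \<and> lam K' = lam K"
proof -
  obtain K'' where K'': "K'' \<in> Mor G" "Dom G K'' = x" "lam K'' = lam (iv K)"
    using tr_dom[OF x iv(1)[OF K]] e iv[OF K] by metis
  have "lam (iv K'') = lam (iv (iv K))" using ic' K'' iv[OF K] by blast
  then show ?thesis using K'' iv[OF K''(1)] ivv[OF K] by metis
qed

lemma dc_trans: assumes "dc c d" "dc d e" shows "dc c e"
proof -
  obtain w F G0 where 1: "Rz F w" "Rz G0 w" "lam F = c" "lam G0 = d" using assms(1) unfolding dc_def by blast
  obtain v G1 H where 2: "Rz G1 v" "Rz H v" "lam G1 = d" "lam H = e" using assms(2) unfolding dc_def by blast
  have Fm: "F \<in> Mor G" and Gm: "G0 \<in> Mor G" and Hm: "H \<in> Mor G" using 1 2 Rz_mor by blast+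
  have Gv: "Rz G0 v" using Rz_color[OF 2(1) Gm] 1 2 by simp
  obtain Z where Z: "Z \<in> Mor G" "Dom G Z = Dom G F" "lam Z = lam G0"
    using tr_dom[OF dc1[OF Fm] Gm] Rz_dom[OF 1(1,2)] by metis
  have Zv: "Rz Z v" using Rz_color[OF Gv Z(1)] Z by simp
  have iZ: "Rz (iv Z) (rev (map invc v))" using Rz_inv[OF Zv] .
  have a1: "Rz (Comp G F (iv Z)) (w @ rev (map invc v))" using Rz_app[OF 1(1) iZ] iv[OF Z(1)] Z by simp
  have a2: "Rz (Comp G (Comp G F (iv Z)) Z) ((w @ rev (map invc v)) @ v)"
    using Rz_app[OF a1 Zv] comp[OF Fm iv(1)[OF Z(1)]] iv[OF Z(1)] Z by simp
  have "Comp G (Comp G F (iv Z)) Z = Comp G F (Comp G (iv Z) Z)"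
    using assoc[OF Fm iv(1)[OF Z(1)] Z(1)] iv[OF Z(1)] Z by simp
  also have "\<dots> = F" using iv[OF Z(1)] Z unitr[OF Fm] by simp
  finally have RF: "Rz F ((w @ rev (map invc v)) @ v)" using a2 by simp
  obtain X where X: "X \<in> Mor G" "Cod G X = Cod G H" "lam X = lam G0"
    using tr_cod[OF dc2[OF Hm] Gm] Rz_cod[OF 2(2) Gv] by metis
  have Xw: "Rz X w" and Xv: "Rz X v" using Rz_color[OF 1(2) X(1)] Rz_color[OF Gv X(1)] X by simp_all
  have b1: "Rz (Comp G X (iv X)) (w @ rev (map invc v))" using Rz_app[OF Xw Rz_inv[OF Xv]] iv[OF X(1)] by simp
  have b2: "Rz (Comp G (Comp G X (iv X)) H) ((w @ rev (map invc v)) @ v)"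
    using Rz_app[OF b1 2(2)] comp[OF X(1) iv(1)[OF X(1)]] iv[OF X(1)] X by simp
  have "Comp G (Comp G X (iv X)) H = H" using iv[OF X(1)] X unitl[OF Hm] by simp
  then have "Rz H ((w @ rev (map invc v)) @ v)" using b2 by simp
  then show ?thesis unfolding dc_def using RF 1 2 by blast
qed

lemma dc_cong: assumes f: "f \<in> Mor G" "f' \<in> Mor G" and g: "g \<in> Mor G" "g' \<in> Mor G"
  and c: "Dom G f = Cod G g" "Dom G f' = Cod G g'" and d: "dc (lam f) (lam f')" "dc (lam g) (lam g')"
  shows "dc (lam (Comp G f g)) (lam (Comp G f' g'))"
proof -
  obtain w where w: "Rz f w" "Rz f' w" using dc_all[OF d(1) f(1) refl f(2) refl] by blast
  obtain v where v: "Rz g v" "Rz g' v" using dc_all[OF d(2) g(1) refl g(2) refl] by blast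
  show ?thesis unfolding dc_def using Rz_app[OF w(1) v(1) c(1)] Rz_app[OF w(2) v(2) c(2)] by blast
qed

end

context mcg begin

lemma seq_Rz: "composable_seq G fs \<Longrightarrow> Rz (comp_list G fs) (map lam fs) \<and> Cod G (comp_list G fs) = Cod G (hd fs)"
proof (induction fs)
  case Nil then show ?case by (simp add: composable_seq_def)
next
  case (Cons f fs)
  show ?case
  proof (cases fs)
    case Nil
    then show ?thesis using Cons.prems Rz.base[of f] by (simp add: composable_seq_def)
  next
    case (Cons g gs)
    have h: "\<forall>i. Suc i < length (f # fs) \<longrightarrow> Dom G ((f # fs) ! i) = Cod G ((f # fs) ! Suc i)"
      and sm: "set fs \<subseteq> Mor G" using Cons.prems unfolding composable_seq_def by auto
    have "\<forall>i. Suc i < length fs \<longrightarrow> Dom G (fs ! i) = Cod G (fs ! Suc i)"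
    proof (intro allI impI)
      fix i assume "Suc i < length fs"
      then show "Dom G (fs ! i) = Cod G (fs ! Suc i)" using h[rule_format, of "Suc i"] by simp
    qed
    then have cs: "composable_seq G fs" using sm \<open>fs = g # gs\<close> unfolding composable_seq_def by simp
    have fm: "f \<in> Mor G" using Cons.prems unfolding composable_seq_def by simp
    have df: "Dom G f = Cod G g" using Cons.prems \<open>fs = g # gs\<close> unfolding composable_seq_def
      by (metis length_Cons nth_Cons_0 nth_Cons_Suc zero_less_Suc Suc_less_eq)
    have IH: "Rz (comp_list G fs) (map lam fs)" "Cod G (comp_list G fs) = Cod G g"
      using Cons.IH[OF cs] \<open>fs = g # gs\<close> by auto
    have "Rz (Comp G f (comp_list G fs)) (lam f # map lam fs)" using Rz.step[OF fm IH(1)] IH(2) df by simp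
    moreover have "Cod G (Comp G f (comp_list G fs)) = Cod G f" using comp[OF fm] IH df Rz_mor by metis
    ultimately show ?thesis using \<open>fs = g # gs\<close> by simp
  qed
qed

lemma Rz_seq: "Rz h w \<Longrightarrow> \<exists>fs. composable_seq G fs \<and> comp_list G fs = h \<and> map lam fs = w"
proof (induction rule: Rz.induct)
  case (base f)
  then show ?case by (intro exI[of _ "[f]"]) (simp add: composable_seq_def)
next
  case (step f g w)
  then obtain fs where fs: "composable_seq G fs" "comp_list G fs = g" "map lam fs = w" by blast
  have c: "Cod G (comp_list G fs) = Cod G (hd fs)" using seq_Rz[OF fs(1)] by blast
  obtain g0 gs where fsc: "fs = g0 # gs" using fs(1) unfolding composable_seq_def by (cases fs) auto
  have "composable_seq G (f # fs)" using fs(1) step.hyps c fs(2) fsc unfolding composable_seq_def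
    apply (auto)
    subgoal for i by (cases i) auto
    done
  moreover have "comp_list G (f # fs) = Comp G f g" using fsc fs(2) by simp
  ultimately show ?case using fs(3) by (intro exI[of _ "f # fs"]) simp
qed

lemma rel1_decl_eq: "rel1_decl G lam = {(c, d). dc c d}"
proof (intro set_eqI iffI)
  fix p assume "p \<in> rel1_decl G lam"
  then obtain fs gs where p: "p = (lam (comp_list G fs), lam (comp_list G gs))" "composable_seq G fs"
     "composable_seq G gs" "length fs = length gs" "\<forall>i<length fs. lam (fs ! i) = lam (gs ! i)"
    unfolding rel1_decl_def by blast
  have "map lam fs = map lam gs" using p(4,5) by (simp add: list_eq_iff_nth_eq)
  then show "p \<in> {(c, d). dc c d}" using seq_Rz[OF p(2)] seq_Rz[OF p(3)] p(1) unfolding dc_def by auto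
next
  fix p assume "p \<in> {(c, d). dc c d}"
  then obtain w F H where p: "p = (lam F, lam H)" "Rz F w" "Rz H w" unfolding dc_def by blast
  obtain fs gs where fs: "composable_seq G fs" "comp_list G fs = F" "map lam fs = w"
     and gs: "composable_seq G gs" "comp_list G gs = H" "map lam gs = w"
    using Rz_seq p by metis
  have "length fs = length gs" using fs gs by (metis length_map)
  moreover have "\<forall>i<length fs. lam (fs ! i) = lam (gs ! i)" using fs gs calculation by (metis nth_map)
  ultimately show "p \<in> rel1_decl G lam" unfolding rel1_decl_def using fs gs p by blast
qed

lemma rel1_eq: "rel1 G lam = {(c, d). dc c d}"
proof -
  let ?R = "{(c, d). dc c d}"
  have sym: "?R\<inverse> = ?R" using dc_sym by auto
  have tr: "trans ?R" unfolding trans_def using dc_trans by blast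
  have "(?R \<union> ?R\<inverse>)\<^sup>+ = ?R" using sym trancl_id[OF tr] by simp
  moreover have "Id_on (I1 G lam) \<subseteq> ?R" unfolding I1_def using dc_refl by auto
  ultimately show ?thesis unfolding rel1_def eq_closure_def rel1_decl_eq by blast
qed

lemma s1_eq: "s1 G lam c = {d. dc c d}"
  unfolding s1_def rel1_eq by auto

lemma lbar_mor_eq: "f \<in> Mor G \<Longrightarrow> g \<in> Mor G \<Longrightarrow> lbar_mor G lam f = lbar_mor G lam g \<longleftrightarrow> dc (lam f) (lam g)"
  unfolding lbar_mor_def s1_eq using dc_refl dc_sym dc_trans by blast

lemma rel0_eq: "rel0 G lam = Id_on (I0 G lam)"
proof -
  have sub: "rel0_decl G lam \<subseteq> Id_on (I0 G lam)"
  proof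
    fix p assume "p \<in> rel0_decl G lam"
    then obtain f g where p: "p = (lam0 G lam (Dom G f), lam0 G lam (Dom G g))" "f \<in> Mor G" "g \<in> Mor G"
       "s1 G lam (lam f) = s1 G lam (lam g)" unfolding rel0_decl_def by blast
    have "dc (lam f) (lam g)" using lbar_mor_eq p(2,3) p(4) unfolding lbar_mor_def by blast
    then obtain w where "Rz f w" "Rz g w" using dc_all p by blast
    then have "lam0 G lam (Dom G f) = lam0 G lam (Dom G g)" unfolding lam0_def using Rz_dom by blast
    moreover have "lam0 G lam (Dom G f) \<in> I0 G lam" unfolding I0_def using dc1 p by blast
    ultimately show "p \<in> Id_on (I0 G lam)" using p by auto
  qed
  have "(rel0_decl G lam \<union> (rel0_decl G lam)\<inverse>)\<^sup>+ \<subseteq> (Id_on (I0 G lam))\<^sup>+"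
    by (rule trancl_mono_subset) (use sub in auto)
  also have "\<dots> = Id_on (I0 G lam)" by (rule trancl_id) (rule trans_Id_on)
  finally show ?thesis unfolding rel0_def eq_closure_def by blast
qed

lemma lbar_obj_eq: "x \<in> Obj G \<Longrightarrow> lbar_obj G lam x = {lam0 G lam x}"
  unfolding lbar_obj_def s0_def rel0_eq I0_def by auto

lemma MorU: "Mor (U G lam) = lbar_mor G lam ` Mor G"
  unfolding U_def quotient_def lbar_mor_def s1_def I1_def by auto

lemma ObjU: "Obj (U G lam) = lbar_obj G lam ` Obj G"
proof -
  have "Obj (U G lam) = (\<lambda>x. {lam0 G lam x}) ` Obj G"
    unfolding U_def quotient_def rel0_eq I0_def by auto
  then show ?thesis using lbar_obj_eq by auto
qed

lemma DomU: assumes f: "f \<in> Mor G" shows "Dom (U G lam) (lbar_mor G lam f) = lbar_obj G lam (Dom G f)"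
proof -
  let ?f = "SOME f'. f' \<in> Mor G \<and> lbar_mor G lam f' = lbar_mor G lam f"
  have "?f \<in> Mor G \<and> lbar_mor G lam ?f = lbar_mor G lam f" by (rule someI[of _ f]) (use f in simp)
  then have h: "?f \<in> Mor G" "dc (lam ?f) (lam f)" using lbar_mor_eq f by blast+
  then obtain w where "Rz ?f w" "Rz f w" using dc_all f by blast
  then have "lam0 G lam (Dom G ?f) = lam0 G lam (Dom G f)" unfolding lam0_def using Rz_dom by blast
  then show ?thesis unfolding U_def using lbar_obj_eq dc1 h f by simp
qed

lemma CodU: assumes f: "f \<in> Mor G" shows "Cod (U G lam) (lbar_mor G lam f) = lbar_obj G lam (Cod G f)"
proof -
  let ?f = "SOME f'. f' \<in> Mor G \<and> lbar_mor G lam f' = lbar_mor G lam f"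
  have "?f \<in> Mor G \<and> lbar_mor G lam ?f = lbar_mor G lam f" by (rule someI[of _ f]) (use f in simp)
  then have h: "?f \<in> Mor G" "dc (lam ?f) (lam f)" using lbar_mor_eq f by blast+
  then obtain w where "Rz ?f w" "Rz f w" using dc_all f by blast
  then have "lam0 G lam (Cod G ?f) = lam0 G lam (Cod G f)" unfolding lam0_def using Rz_cod by blast
  then show ?thesis unfolding U_def using lbar_obj_eq dc2 h f by simp
qed

lemma IdeU: assumes x: "x \<in> Obj G" shows "Ide (U G lam) (lbar_obj G lam x) = lbar_mor G lam (Ide G x)"
proof -
  let ?y = "SOME y. y \<in> Obj G \<and> lbar_obj G lam y = lbar_obj G lam x"
  have "?y \<in> Obj G \<and> lbar_obj G lam ?y = lbar_obj G lam x" by (rule someI[of _ x]) (use x in simp)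
  then have "lam0 G lam ?y = lam0 G lam x" using lbar_obj_eq x by auto
  then show ?thesis unfolding U_def lbar_mor_def lam0_def by simp
qed

lemma CompU: assumes f: "f \<in> Mor G" and g: "g \<in> Mor G" and fg: "Dom G f = Cod G g"
  shows "Comp (U G lam) (lbar_mor G lam f) (lbar_mor G lam g) = lbar_mor G lam (Comp G f g)"
proof -
  let ?P = "\<lambda>(f', g'). f' \<in> Mor G \<and> g' \<in> Mor G \<and> Dom G f' = Cod G g' \<and>
                lbar_mor G lam f' = lbar_mor G lam f \<and> lbar_mor G lam g' = lbar_mor G lam g"
  obtain f' g' where e: "(SOME p. ?P p) = (f', g')" by fastforce
  have "?P (SOME p. ?P p)" by (rule someI[of _ "(f, g)"]) (use f g fg in simp)
  then have h: "f' \<in> Mor G" "g' \<in> Mor G" "Dom G f' = Cod G g'"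
     "lbar_mor G lam f' = lbar_mor G lam f" "lbar_mor G lam g' = lbar_mor G lam g" using e by auto
  have "dc (lam f') (lam f)" "dc (lam g') (lam g)" using h lbar_mor_eq f g by blast+
  then have "dc (lam (Comp G f' g')) (lam (Comp G f g))" using dc_cong h f g fg by blast
  then have "lbar_mor G lam (Comp G f' g') = lbar_mor G lam (Comp G f g)"
    using lbar_mor_eq comp h f g fg by blast
  moreover have "Comp (U G lam) (lbar_mor G lam f) (lbar_mor G lam g) = lbar_mor G lam (Comp G f' g')"
    unfolding U_def cat.select_convs e by simp
  ultimately show ?thesis by simp
qed

lemma reps: assumes f: "f \<in> Mor G" and g: "g \<in> Mor G"
  and e: "Dom (U G lam) (lbar_mor G lam f) = Cod (U G lam) (lbar_mor G lam g)"
  shows "\<exists>f' \<in> Mor G. lbar_mor G lam f' = lbar_mor G lam f \<and> Dom G f' = Cod G g"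
proof -
  have "{lam0 G lam (Dom G f)} = {lam0 G lam (Cod G g)}" using e DomU[OF f] CodU[OF g] lbar_obj_eq dc1 dc2 f g by metis
  then have "lam (Ide G (Cod G g)) = lam (Ide G (Dom G f))" unfolding lam0_def by simp
  then obtain f' where "f' \<in> Mor G" "Dom G f' = Cod G g" "lam f' = lam f" using tr_dom[OF dc2[OF g] f] by blast
  then show ?thesis unfolding lbar_mor_def by metis
qed

end

context mcg begin

abbreviation "UU \<equiv> U G lam"
abbreviation "lm \<equiv> lbar_mor G lam"
abbreviation "lo \<equiv> lbar_obj G lam"

lemma morE: assumes "m \<in> Mor UU" obtains f where "f \<in> Mor G" "m = lm f"
  using assms MorU by auto

lemma objE: assumes "a \<in> Obj UU" obtains x where "x \<in> Obj G" "a = lo x"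
  using assms ObjU by auto

lemma lm_in: "f \<in> Mor G \<Longrightarrow> lm f \<in> Mor UU" using MorU by auto
lemma lo_in: "x \<in> Obj G \<Longrightarrow> lo x \<in> Obj UU" using ObjU by auto

lemma catU: "category UU"
proof -
  have c1: "\<forall>f\<in>Mor UU. Dom UU f \<in> Obj UU \<and> Cod UU f \<in> Obj UU"
  proof
    fix m assume "m \<in> Mor UU"
    then obtain f where f: "f \<in> Mor G" "m = lm f" by (rule morE)
    show "Dom UU m \<in> Obj UU \<and> Cod UU m \<in> Obj UU" using f DomU CodU lo_in dc1 dc2 by simp
  qed
  have c2: "\<forall>x\<in>Obj UU. Ide UU x \<in> Mor UU \<and> Dom UU (Ide UU x) = x \<and> Cod UU (Ide UU x) = x"
  proof
    fix a assume "a \<in> Obj UU"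
    then obtain x where x: "x \<in> Obj G" "a = lo x" by (rule objE)
    show "Ide UU a \<in> Mor UU \<and> Dom UU (Ide UU a) = a \<and> Cod UU (Ide UU a) = a"
      using x IdeU lm_in ide DomU CodU by simp
  qed
  have c3: "\<forall>f\<in>Mor UU. \<forall>g\<in>Mor UU. Dom UU f = Cod UU g \<longrightarrow>
        Comp UU f g \<in> Mor UU \<and> Dom UU (Comp UU f g) = Dom UU g \<and> Cod UU (Comp UU f g) = Cod UU f"
  proof (intro ballI impI)
    fix m n assume m: "m \<in> Mor UU" and n: "n \<in> Mor UU" and e: "Dom UU m = Cod UU n"
    obtain f where f: "f \<in> Mor G" "m = lm f" using m by (rule morE)
    obtain g where g: "g \<in> Mor G" "n = lm g" using n by (rule morE)
    obtain f' where f': "f' \<in> Mor G" "lm f' = lm f" "Dom G f' = Cod G g" using reps f g e by blast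
    have m': "m = lm f'" using f f' by simp
    show "Comp UU m n \<in> Mor UU \<and> Dom UU (Comp UU m n) = Dom UU n \<and> Cod UU (Comp UU m n) = Cod UU m"
      using m' g f'(1,3) CompU lm_in comp DomU CodU by simp
  qed
  have c4: "\<forall>f\<in>Mor UU. Comp UU (Ide UU (Cod UU f)) f = f \<and> Comp UU f (Ide UU (Dom UU f)) = f"
  proof
    fix m assume "m \<in> Mor UU"
    then obtain f where f: "f \<in> Mor G" "m = lm f" by (rule morE)
    show "Comp UU (Ide UU (Cod UU m)) m = m \<and> Comp UU m (Ide UU (Dom UU m)) = m"
      using f CodU DomU IdeU dc1 dc2 CompU ide unitl unitr by simp
  qed
  have c5: "\<forall>f\<in>Mor UU. \<forall>g\<in>Mor UU. \<forall>h\<in>Mor UU. Dom UU f = Cod UU g \<longrightarrow> Dom UU g = Cod UU h \<longrightarrow>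
        Comp UU (Comp UU f g) h = Comp UU f (Comp UU g h)"
  proof (intro ballI impI)
    fix m n p assume m: "m \<in> Mor UU" and n: "n \<in> Mor UU" and p: "p \<in> Mor UU"
      and e1: "Dom UU m = Cod UU n" and e2: "Dom UU n = Cod UU p"
    obtain f where f: "f \<in> Mor G" "m = lm f" using m by (rule morE)
    obtain g where g: "g \<in> Mor G" "n = lm g" using n by (rule morE)
    obtain h where h: "h \<in> Mor G" "p = lm h" using p by (rule morE)
    obtain g' where g': "g' \<in> Mor G" "lm g' = lm g" "Dom G g' = Cod G h" using reps g h e2 f g h by blast
    have e1': "Dom UU (lm f) = Cod UU (lm g')" using e1 f g g' by simp
    obtain f' where f': "f' \<in> Mor G" "lm f' = lm f" "Dom G f' = Cod G g'" using reps[OF f(1) g'(1) e1'] by blast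
    have "Comp UU (Comp UU m n) p = lm (Comp G (Comp G f' g') h)"
      using f f' g g' h CompU comp by (metis)
    also have "\<dots> = lm (Comp G f' (Comp G g' h))" using assoc f' g' h by simp
    also have "\<dots> = Comp UU m (Comp UU n p)"
      using f f' g g' h CompU comp by (metis)
    finally show "Comp UU (Comp UU m n) p = Comp UU m (Comp UU n p)" .
  qed
  show ?thesis unfolding category_def using c1 c2 c3 c4 c5 by blast
qed

lemma mccatU: "mc_category UU id"
  unfolding mc_category_def using catU by auto

end

lemma mccat_disc: "category C \<Longrightarrow> mc_category C id"
  unfolding mc_category_def by auto

locale mcf = mcg G lam for G :: "('o, 'm) cat" and lam :: "'m \<Rightarrow> 'c" +
  fixes C :: "('p, 'n) cat" and Fo :: "'o \<Rightarrow> 'p" and Fm :: "'m \<Rightarrow> 'n" and gam :: "'c \<Rightarrow> 'n"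
  assumes cC: "category C" and mf: "mc_functor G lam C id Fo Fm gam"
begin

lemma funG: "functor G C Fo Fm" using mf unfolding mc_functor_def by blast

lemma Fo_in: "x \<in> Obj G \<Longrightarrow> Fo x \<in> Obj C" using funG unfolding functor_def by blast
lemma Fm_in: "f \<in> Mor G \<Longrightarrow> Fm f \<in> Mor C \<and> Dom C (Fm f) = Fo (Dom G f) \<and> Cod C (Fm f) = Fo (Cod G f)"
  using funG unfolding functor_def by blast
lemma Fm_ide: "x \<in> Obj G \<Longrightarrow> Fm (Ide G x) = Ide C (Fo x)" using funG unfolding functor_def by blast
lemma Fm_comp: "f \<in> Mor G \<Longrightarrow> g \<in> Mor G \<Longrightarrow> Dom G f = Cod G g \<Longrightarrow> Fm (Comp G f g) = Comp C (Fm f) (Fm g)"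
  using funG unfolding functor_def by blast
lemma Fm_gam: "f \<in> Mor G \<Longrightarrow> Fm f = gam (lam f)" using mf unfolding mc_functor_def by simp

lemma Fm_Rz: "Rz h w \<Longrightarrow> Rz k w \<Longrightarrow> Fm h = Fm k"
proof (induction arbitrary: k rule: Rz.induct)
  case (base f)
  then show ?case using Rz_single Fm_gam by metis
next
  case (step f g w)
  have gm: "g \<in> Mor G" and "w \<noteq> []" using Rz_mor step by blast+
  then obtain f' g' where h: "k = Comp G f' g'" "f' \<in> Mor G" "Rz g' w" "Dom G f' = Cod G g'" "lam f' = lam f"
    using Rz_cons step.prems by blast
  have "Fm g = Fm g'" using step.IH h by blast
  moreover have "Fm f = Fm f'" using Fm_gam h step.hyps by metis
  ultimately show ?case using Fm_comp h step.hyps gm Rz_mor by metis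
qed

lemma Fm_dc: "f \<in> Mor G \<Longrightarrow> g \<in> Mor G \<Longrightarrow> dc (lam f) (lam g) \<Longrightarrow> Fm f = Fm g"
  using dc_all Fm_Rz by metis

lemma Fo_resp: assumes "x \<in> Obj G" "y \<in> Obj G" "lam0 G lam x = lam0 G lam y" shows "Fo x = Fo y"
proof -
  have "Fm (Ide G x) = Fm (Ide G y)" using Fm_gam assms ide unfolding lam0_def by metis
  then show ?thesis using Fm_in ide assms by metis
qed

definition "Fo' a = Fo (SOME x. x \<in> Obj G \<and> lo x = a)"
definition "Fm' m = Fm (SOME f. f \<in> Mor G \<and> lm f = m)"

lemma Fo'_lo: assumes x: "x \<in> Obj G" shows "Fo' (lo x) = Fo x"
proof -
  let ?y = "SOME y. y \<in> Obj G \<and> lo y = lo x"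
  have "?y \<in> Obj G \<and> lo ?y = lo x" by (rule someI[of _ x]) (use x in simp)
  then have "?y \<in> Obj G" "lam0 G lam ?y = lam0 G lam x" using lbar_obj_eq x by auto
  then show ?thesis unfolding Fo'_def using Fo_resp x by blast
qed

lemma Fm'_lm: assumes f: "f \<in> Mor G" shows "Fm' (lm f) = Fm f"
proof -
  let ?g = "SOME g. g \<in> Mor G \<and> lm g = lm f"
  have "?g \<in> Mor G \<and> lm ?g = lm f" by (rule someI[of _ f]) (use f in simp)
  then show ?thesis unfolding Fm'_def using Fm_dc lbar_mor_eq f by blast
qed

lemma funU: "functor UU C Fo' Fm'"
proof -
  have c1: "\<forall>x\<in>Obj UU. Fo' x \<in> Obj C"
    using ObjU Fo'_lo Fo_in by auto
  have c2: "\<forall>f\<in>Mor UU. Fm' f \<in> Mor C \<and> Dom C (Fm' f) = Fo' (Dom UU f) \<and> Cod C (Fm' f) = Fo' (Cod UU f)"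
  proof
    fix m assume "m \<in> Mor UU"
    then obtain f where f: "f \<in> Mor G" "m = lm f" by (rule morE)
    show "Fm' m \<in> Mor C \<and> Dom C (Fm' m) = Fo' (Dom UU m) \<and> Cod C (Fm' m) = Fo' (Cod UU m)"
      using f Fm'_lm Fm_in DomU CodU Fo'_lo dc1 dc2 by simp
  qed
  have c3: "\<forall>x\<in>Obj UU. Fm' (Ide UU x) = Ide C (Fo' x)"
  proof
    fix a assume "a \<in> Obj UU"
    then obtain x where x: "x \<in> Obj G" "a = lo x" by (rule objE)
    show "Fm' (Ide UU a) = Ide C (Fo' a)" using x IdeU Fm'_lm ide Fm_ide Fo'_lo by simp
  qed
  have c4: "\<forall>f\<in>Mor UU. \<forall>g\<in>Mor UU. Dom UU f = Cod UU g \<longrightarrow> Fm' (Comp UU f g) = Comp C (Fm' f) (Fm' g)"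
  proof (intro ballI impI)
    fix m n assume m: "m \<in> Mor UU" and n: "n \<in> Mor UU" and e: "Dom UU m = Cod UU n"
    obtain f where f: "f \<in> Mor G" "m = lm f" using m by (rule morE)
    obtain g where g: "g \<in> Mor G" "n = lm g" using n by (rule morE)
    obtain f' where f': "f' \<in> Mor G" "lm f' = lm f" "Dom G f' = Cod G g" using reps f g e by blast
    have m': "m = lm f'" using f f' by simp
    show "Fm' (Comp UU m n) = Comp C (Fm' m) (Fm' n)"
      using m' g f'(1,3) CompU Fm'_lm comp Fm_comp by simp
  qed
  show ?thesis unfolding functor_def using c1 c2 c3 c4 catU cC by blast
qed

lemma mcfU: "mc_functor UU id C id Fo' Fm' Fm'"
  unfolding mc_functor_def using mccatU mccat_disc[OF cC] funU by simp

end

theorem mainTheorem2: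
  fixes G :: "('o, 'm) cat" and lam :: "'m \<Rightarrow> 'c"
    and C :: "('p, 'n) cat" and Fo :: "'o \<Rightarrow> 'p" and Fm :: "'m \<Rightarrow> 'n" and gam :: "'c \<Rightarrow> 'n"
  assumes "mc_groupoid G lam"
    and "inverse_compatible G lam"
    and "category C"
    and "mc_functor G lam C id Fo Fm gam"
  shows "\<exists>Fo' Fm' gam'.
     mc_functor (U G lam) id C id Fo' Fm' gam' \<and>
     (\<forall>x\<in>Obj G. Fo' (lbar_obj G lam x) = Fo x) \<and>
     (\<forall>f\<in>Mor G. Fm' (lbar_mor G lam f) = Fm f) \<and>
     (\<forall>c\<in>I1 G lam. gam' (s1 G lam c) = gam c) \<and>
     (\<forall>Fo'' Fm'' gam''.
        mc_functor (U G lam) id C id Fo'' Fm'' gam'' \<and>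
        (\<forall>x\<in>Obj G. Fo'' (lbar_obj G lam x) = Fo x) \<and>
        (\<forall>f\<in>Mor G. Fm'' (lbar_mor G lam f) = Fm f) \<and>
        (\<forall>c\<in>I1 G lam. gam'' (s1 G lam c) = gam c) \<longrightarrow>
        (\<forall>a\<in>Obj (U G lam). Fo'' a = Fo' a) \<and>
        (\<forall>m\<in>Mor (U G lam). Fm'' m = Fm' m \<and> gam'' m = gam' m))"
proof -
  interpret mcf G lam C Fo Fm gam
    using assms by unfold_locales auto
  have A: "\<forall>x\<in>Obj G. Fo' (lo x) = Fo x" using Fo'_lo by blast
  have B: "\<forall>f\<in>Mor G. Fm' (lm f) = Fm f" using Fm'_lm by blast
  have Cc: "\<forall>c\<in>I1 G lam. Fm' (s1 G lam c) = gam c"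
    unfolding I1_def using Fm'_lm Fm_gam unfolding lbar_mor_def by auto
  have D: "(\<forall>a\<in>Obj UU. Fo'' a = Fo' a) \<and> (\<forall>m\<in>Mor UU. Fm'' m = Fm' m \<and> gam'' m = Fm' m)"
    if h: "mc_functor UU id C id Fo'' Fm'' gam''" "\<forall>x\<in>Obj G. Fo'' (lo x) = Fo x"
       "\<forall>f\<in>Mor G. Fm'' (lm f) = Fm f" for Fo'' Fm'' gam''
  proof (intro conjI ballI)
    fix a assume "a \<in> Obj UU"
    then obtain x where "x \<in> Obj G" "a = lo x" by (rule objE)
    then show "Fo'' a = Fo' a" using h A by simp
  next
    fix m assume m: "m \<in> Mor UU"
    then obtain f where f: "f \<in> Mor G" "m = lm f" by (rule morE)
    show "Fm'' m = Fm' m" using h B f by simp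
  next
    fix m assume m: "m \<in> Mor UU"
    then obtain f where f: "f \<in> Mor G" "m = lm f" by (rule morE)
    have "gam'' m = Fm'' m" using h(1) m unfolding mc_functor_def by simp
    then show "gam'' m = Fm' m" using h B f by simp
  qed
  have E: "mc_functor (U G lam) id C id Fo' Fm' Fm' \<and>
     (\<forall>x\<in>Obj G. Fo' (lbar_obj G lam x) = Fo x) \<and>
     (\<forall>f\<in>Mor G. Fm' (lbar_mor G lam f) = Fm f) \<and>
     (\<forall>c\<in>I1 G lam. Fm' (s1 G lam c) = gam c) \<and>
     (\<forall>Fo'' Fm'' gam''.
        mc_functor (U G lam) id C id Fo'' Fm'' gam'' \<and>
        (\<forall>x\<in>Obj G. Fo'' (lbar_obj G lam x) = Fo x) \<and>
        (\<forall>f\<in>Mor G. Fm'' (lbar_mor G lam f) = Fm f) \<and>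
        (\<forall>c\<in>I1 G lam. gam'' (s1 G lam c) = gam c) \<longrightarrow>
        (\<forall>a\<in>Obj (U G lam). Fo'' a = Fo' a) \<and>
        (\<forall>m\<in>Mor (U G lam). Fm'' m = Fm' m \<and> gam'' m = Fm' m))"
    using mcfU A B Cc D by blast
  show ?thesis by (rule exI[of _ Fo'], rule exI[of _ Fm'], rule exI[of _ Fm']) (rule E)
qed

end
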